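(* Suppose $S$ is totally ordered and $V\subset\mathcal H$ is dense in $\mathcal H$. If for every $\phi\in V\setminus\{0\}$ there is a probability measure $\mathbb P_\phi$ on $(\Omega,\Sigma)$ such that $$\mathbb P_\phi(X_{t_i}=a_i,\ i=1,\dots,k)=\|p^{t_k}_{a_k}\cdots p^{t_1}_{a_1}\hat\phi\|^2$$ for every $t_1<\dots<t_k$ in $S$ and every $a_i\in\Gamma(t_i)$, then $\mathcal H_\pi=\mathcal H$, i.e., $p^s_a$ and $p^t_b$ commute for all $s,t\in S$, $a\in\Gamma(s)$, $b\in\Gamma(t)$.
   Context: Let $\mathcal H$ be a complex Hilbert space. A projection is a bounded self-adjoint idempotent operator. For $\phi\neq0$, $\hat\phi=\phi/\|\phi\|$. Sums of countably many operators are understood strongly. Let $S$ be a set; for each $t\in S$ let $\Gamma(t)$ be a countable set and for $a\in\Gamma(t)$ let $p^t_a$ be a projection on $\mathcal H$ with $\sum_{a\in\Gamma(t)}p^t_a=I$. Let $\pi=\{p^t_a\}$. $\pi$ commutes on $\phi$ if $W\phi=V\phi$ whenever $W,V$ are finite products of elements of $\pi$ with the same factors (with multiplicity) in possibly different orders; $\mathcal H_\pi$ is the set of such $\phi$. Let $\Omega=\prod_{t\in S}\Gamma(t)$, $X_t(\omega)=\omega_t$, and $\Sigma$ the σ-algebra generated by the sets $\{X_t=a\}$; $\{X_{t_i}=a_i,\ i=1,\dots,k\}=\{\omega:\omega_{t_i}=a_i,\ i=1,\dots,k\}$. *)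

theory Defs
  imports "HOL-Probability.Probability"
begin

class complex_hilbert = banach +
  fixes scaleC :: "complex \<Rightarrow> 'a \<Rightarrow> 'a"
    and cinner :: "'a \<Rightarrow> 'a \<Rightarrow> complex"
  assumes scaleC_add_right: "scaleC c (x + y) = scaleC c x + scaleC c y"
    and scaleC_add_left: "scaleC (c + d) x = scaleC c x + scaleC d x"
    and scaleC_scaleC: "scaleC c (scaleC d x) = scaleC (c * d) x"
    and scaleC_one: "scaleC 1 x = x"
    and scaleR_scaleC: "scaleR r x = scaleC (complex_of_real r) x"
    and cinner_commute: "cinner x y = cnj (cinner y x)"
    and cinner_add_left: "cinner (x + y) z = cinner x z + cinner y z"
    and cinner_scaleC_left: "cinner (scaleC c x) y = cnj c * cinner x y"
    and cinner_self_nonneg: "Im (cinner x x) = 0 \<and> 0 \<le> Re (cinner x x)"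
    and norm_cinner: "norm x = sqrt (Re (cinner x x))"

definition is_projection :: "('a::complex_hilbert \<Rightarrow> 'a) \<Rightarrow> bool" where
  "is_projection P \<longleftrightarrow>
     (\<forall>x y. P (x + y) = P x + P y) \<and>
     (\<forall>c x. P (scaleC c x) = scaleC c (P x)) \<and>
     (\<exists>K. \<forall>x. norm (P x) \<le> K * norm x) \<and>
     (\<forall>x y. cinner (P x) y = cinner x (P y)) \<and>
     P \<circ> P = P"

definition normalize :: "'a::real_normed_vector \<Rightarrow> 'a" where
  "normalize \<phi> = scaleR (inverse (norm \<phi>)) \<phi>"

text \<open>Apply the product \<open>p^{t_k}_{a_k} \<cdots> p^{t_1}_{a_1}\<close>: the first list element acts first.\<close>
definition apply_seq :: "('s \<Rightarrow> 'b \<Rightarrow> 'a \<Rightarrow> 'a) \<Rightarrow> ('s \<times> 'b) list \<Rightarrow> 'a \<Rightarrow> 'a" where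
  "apply_seq p ws x = fold (\<lambda>(t, a) y. p t a y) ws x"

definition pi_words :: "'s set \<Rightarrow> ('s \<Rightarrow> 'b set) \<Rightarrow> ('s \<times> 'b) list set" where
  "pi_words S \<Gamma> = {ws. \<forall>(t, a) \<in> set ws. t \<in> S \<and> a \<in> \<Gamma> t}"

text \<open>\<open>\<H>_\<pi>\<close>: vectors on which \<open>\<pi>\<close> commutes (products with the same factors, counted
with multiplicity, in any orders agree on \<open>\<phi>\<close>).\<close>
definition H_pi :: "'s set \<Rightarrow> ('s \<Rightarrow> 'b set) \<Rightarrow> ('s \<Rightarrow> 'b \<Rightarrow> 'a \<Rightarrow> 'a) \<Rightarrow> 'a set" where
  "H_pi S \<Gamma> p = {\<phi>. \<forall>ws \<in> pi_words S \<Gamma>. \<forall>vs \<in> pi_words S \<Gamma>.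
       mset (map (\<lambda>(t, a). p t a) ws) = mset (map (\<lambda>(t, a). p t a) vs) \<longrightarrow>
       apply_seq p ws \<phi> = apply_seq p vs \<phi>}"

definition Omega :: "'s set \<Rightarrow> ('s \<Rightarrow> 'b set) \<Rightarrow> ('s \<Rightarrow> 'b) set" where
  "Omega S \<Gamma> = PiE S \<Gamma>"

definition cyl_gens :: "'s set \<Rightarrow> ('s \<Rightarrow> 'b set) \<Rightarrow> ('s \<Rightarrow> 'b) set set" where
  "cyl_gens S \<Gamma> = {{\<omega> \<in> Omega S \<Gamma>. \<omega> t = a} | t a. t \<in> S \<and> a \<in> \<Gamma> t}"

definition Sigma_alg :: "'s set \<Rightarrow> ('s \<Rightarrow> 'b set) \<Rightarrow> ('s \<Rightarrow> 'b) set set" where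
  "Sigma_alg S \<Gamma> = sigma_sets (Omega S \<Gamma>) (cyl_gens S \<Gamma>)"

definition cyl :: "'s set \<Rightarrow> ('s \<Rightarrow> 'b set) \<Rightarrow> ('s \<times> 'b) list \<Rightarrow> ('s \<Rightarrow> 'b) set" where
  "cyl S \<Gamma> ws = {\<omega> \<in> Omega S \<Gamma>. \<forall>(t, a) \<in> set ws. \<omega> t = a}"

end

theory Submission
  imports Defs
begin
lemma ci_zero_left: "cinner (0::'a::complex_hilbert) y = 0"
proof -
  have "cinner (0+0::'a) y = cinner 0 y + cinner 0 y" by (rule cinner_add_left)
  thus ?thesis by simp
qed

lemma ci_minus_left: "cinner (- x::'a::complex_hilbert) y = - cinner x y"
proof -
  have "cinner (x + - x::'a) y = cinner x y + cinner (-x) y" by (rule cinner_add_left)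
  hence "0 = cinner x y + cinner (-x) y" by (simp add: ci_zero_left)
  thus ?thesis by (simp add: eq_neg_iff_add_eq_0 add.commute)
qed

lemma ci_diff_left: "cinner (x - z::'a::complex_hilbert) y = cinner x y - cinner z y"
  by (simp only: diff_conv_add_uminus cinner_add_left ci_minus_left)

lemma ci_add_right: "cinner y (x + z::'a::complex_hilbert) = cinner y x + cinner y z"
proof -
  have "cinner y (x + z) = cnj (cinner (x+z) y)" by (rule cinner_commute)
  also have "\<dots> = cnj (cinner x y) + cnj (cinner z y)" by (simp only: cinner_add_left complex_cnj_add)
  also have "\<dots> = cinner y x + cinner y z" by (simp only: cinner_commute[of y x] cinner_commute[of y z])
  finally show ?thesis .
qed

lemma ci_diff_right: "cinner y (x - z::'a::complex_hilbert) = cinner y x - cinner y z"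
proof -
  have "cinner y (x - z) = cnj (cinner (x-z) y)" by (rule cinner_commute)
  also have "\<dots> = cnj (cinner x y) - cnj (cinner z y)" by (simp only: ci_diff_left complex_cnj_diff)
  also have "\<dots> = cinner y x - cinner y z" by (simp only: cinner_commute[of y x] cinner_commute[of y z])
  finally show ?thesis .
qed

lemma ci_Re_commute: "Re (cinner y (x::'a::complex_hilbert)) = Re (cinner x y)"
  by (subst cinner_commute) simp

lemma norm_sq_ci: "(norm (x::'a::complex_hilbert))\<^sup>2 = Re (cinner x x)"
  using norm_cinner[of x] cinner_self_nonneg[of x] by simp

lemma ci_self_zero: "Re (cinner x x) \<le> 0 \<Longrightarrow> (x::'a::complex_hilbert) = 0"
proof -
  assume "Re (cinner x x) \<le> 0"
  hence "(norm x)\<^sup>2 \<le> 0" by (simp add: norm_sq_ci)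
  thus ?thesis by simp
qed

lemma proj_basic:
  assumes "is_projection (P::'a::complex_hilbert \<Rightarrow> 'a)"
  shows "P (x + y) = P x + P y" "P (x - y) = P x - P y" "P 0 = 0" "P (P x) = P x"
    "cinner (P x) y = cinner x (P y)"
    "P (r *\<^sub>R x) = r *\<^sub>R P x"
proof -
  have add: "\<And>x y. P (x + y) = P x + P y" using assms unfolding is_projection_def by blast
  show "P (x + y) = P x + P y" by (rule add)
  have "P (0 + 0) = P 0 + P 0" by (rule add)
  thus z: "P 0 = 0" by simp
  have "P (x - y + y) = P (x - y) + P y" by (rule add)
  thus "P (x - y) = P x - P y" by (simp add: algebra_simps)
  show "P (P x) = P x" using assms unfolding is_projection_def by (metis comp_apply)
  show "cinner (P x) y = cinner x (P y)" using assms unfolding is_projection_def by blast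
  have "P (scaleC (complex_of_real r) x) = scaleC (complex_of_real r) (P x)"
    using assms unfolding is_projection_def by blast
  thus "P (r *\<^sub>R x) = r *\<^sub>R P x" by (simp add: scaleR_scaleC)
qed

lemma proj_bl:
  assumes "is_projection (P::'a::complex_hilbert \<Rightarrow> 'a)"
  shows "bounded_linear P"
proof -
  obtain K where K: "\<And>x. norm (P x) \<le> K * norm x" using assms unfolding is_projection_def by blast
  show ?thesis
    by (rule bounded_linear_intro[where K=K]) (auto simp: proj_basic[OF assms] K mult.commute)
qed

lemma proj_norm_le:
  assumes B: "is_projection (B::'a::complex_hilbert \<Rightarrow> 'a)"
  shows "(norm (B z))\<^sup>2 \<le> (norm z)\<^sup>2"
proof -
  note b = proj_basic[OF B]
  have e1: "Re (cinner (B z) (B z)) = Re (cinner z (B z))" by (simp add: b)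
  have e2: "Re (cinner (B z) z) = Re (cinner z (B z))" by (simp add: b)
  have "0 \<le> Re (cinner (z - B z) (z - B z))" using cinner_self_nonneg by blast
  also have "\<dots> = Re (cinner z z) - Re (cinner z (B z)) - Re (cinner (B z) z) + Re (cinner (B z) (B z))"
    by (simp add: ci_diff_left ci_diff_right)
  finally show ?thesis using e1 e2 by (simp add: norm_sq_ci)
qed

lemma comm_lemma:
  assumes A: "is_projection (A::'a::complex_hilbert \<Rightarrow> 'a)" and B: "is_projection B"
    and le: "\<And>\<phi>. norm (A (B \<phi>)) \<le> norm (A \<phi>)"
  shows "A \<circ> B = B \<circ> A"
proof -
  note a = proj_basic[OF A] and b = proj_basic[OF B]
  have ABB: "A (B \<psi>) = B (A (B \<psi>))" for \<psi>
  proof -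
    define x where "x = B \<psi>"
    define w where "w = A x"
    define z where "z = w - B w"
    have Bz: "B z = 0" by (simp add: z_def b)
    have Bx: "B (x - z) = x" by (simp add: x_def b Bz)
    have "norm (A x) \<le> norm (A (x - z))" using le[of "x - z"] Bx by simp
    hence i1: "(norm w)\<^sup>2 \<le> (norm (w - A z))\<^sup>2" by (simp add: w_def a)
    have "(norm (w - A z))\<^sup>2 = Re (cinner w w) - Re (cinner w (A z)) - Re (cinner (A z) w) + Re (cinner (A z) (A z))"
      by (simp add: norm_sq_ci ci_diff_left ci_diff_right)
    also have "Re (cinner (A z) w) = Re (cinner w (A z))" by (rule ci_Re_commute)
    also have "Re (cinner w (A z)) = Re (cinner w z)"
      by (simp add: w_def a(5)[symmetric] a(4))
    also have "Re (cinner (A z) (A z)) = (norm (A z))\<^sup>2" by (simp add: norm_sq_ci)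
    finally have i2: "(norm (w - A z))\<^sup>2 = (norm w)\<^sup>2 - 2 * Re (cinner w z) + (norm (A z))\<^sup>2"
      by (simp add: norm_sq_ci)
    have "(norm z)\<^sup>2 = Re (cinner w w) - Re (cinner w (B w)) - Re (cinner (B w) w) + Re (cinner (B w) (B w))"
      by (simp add: z_def norm_sq_ci ci_diff_left ci_diff_right)
    also have "Re (cinner (B w) w) = Re (cinner w (B w))" by (simp add: b)
    also have "Re (cinner (B w) (B w)) = Re (cinner w (B w))" by (simp add: b)
    finally have i3: "(norm z)\<^sup>2 = Re (cinner w z)"
      by (simp add: z_def ci_diff_right)
    have i4: "(norm (A z))\<^sup>2 \<le> (norm z)\<^sup>2" by (rule proj_norm_le[OF A])
    from i1 i2 i3 i4 have "(norm z)\<^sup>2 \<le> 0" by linarith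
    hence "z = 0" by simp
    thus ?thesis by (simp add: z_def w_def x_def)
  qed
  show ?thesis
  proof
    fix \<psi>
    define v where "v = B (A \<psi>) - A (B \<psi>)"
    have "cinner u v = 0" for u
    proof -
      have "cinner u (B (A \<psi>)) = cinner (A (B u)) \<psi>" by (simp add: a b)
      also have "\<dots> = cinner (B (A (B u))) \<psi>" by (simp add: ABB[symmetric])
      also have "\<dots> = cinner u (B (A (B \<psi>)))" by (simp add: a b)
      also have "\<dots> = cinner u (A (B \<psi>))" by (simp only: ABB[symmetric])
      finally show ?thesis by (simp add: v_def ci_diff_right)
    qed
    hence "v = 0" using ci_self_zero[of v] by simp
    thus "(A \<circ> B) \<psi> = (B \<circ> A) \<psi>" by (simp add: v_def)
  qed
qed

lemma polar_Re: "Re (cinner y (v::'a::complex_hilbert)) = ((norm (y + v))\<^sup>2 - (norm (y - v))\<^sup>2) / 4"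
proof -
  have "(norm (y + v))\<^sup>2 = Re (cinner y y) + Re (cinner y v) + Re (cinner v y) + Re (cinner v v)"
    by (simp add: norm_sq_ci cinner_add_left ci_add_right)
  moreover have "(norm (y - v))\<^sup>2 = Re (cinner y y) - Re (cinner y v) - Re (cinner v y) + Re (cinner v v)"
    by (simp add: norm_sq_ci ci_diff_left ci_diff_right)
  moreover have "Re (cinner v y) = Re (cinner y v)" by (rule ci_Re_commute)
  ultimately show ?thesis by simp
qed

lemma ortho_lemma:
  assumes res: "\<And>x. ((\<lambda>c. P c x) has_sum x) G"
    and pr: "\<And>c. c \<in> G \<Longrightarrow> is_projection (P c :: 'a::complex_hilbert \<Rightarrow> 'a)"
    and ab: "a \<in> G" "b \<in> G" "a \<noteq> b"
  shows "P a (P b x) = 0"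
proof -
  define y where "y = P b x"
  define f where "f v = Re (cinner y v)" for v
  have fe: "f = (\<lambda>v. ((norm (y + v))\<^sup>2 - (norm (y - v))\<^sup>2) / 4)"
    by (rule ext) (simp add: f_def polar_Re)
  have add: "Modules.additive f" by (unfold_locales) (simp add: f_def ci_add_right)
  have cont: "f \<midarrow>y\<rightarrow> f y" unfolding fe by (intro tendsto_intros) simp
  have hs: "((f \<circ> (\<lambda>c. P c y)) has_sum f y) G"
    by (rule has_sum_comm_additive[OF add cont res])
  have fP: "f (P c y) = (norm (P c y))\<^sup>2" if "c \<in> G" for c
    using proj_basic[OF pr[OF that]] by (simp add: f_def norm_sq_ci)
  have fy: "f y = (norm y)\<^sup>2" by (simp add: f_def norm_sq_ci)
  have Pby: "P b y = y" using proj_basic[OF pr[OF ab(2)]] by (simp add: y_def)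
  have hs1: "((\<lambda>c. (norm (P c y))\<^sup>2) has_sum f y) G"
    using hs fP by (simp add: comp_def cong: has_sum_cong)
  have hs2: "((\<lambda>c. (norm (P c y))\<^sup>2) has_sum (norm y)\<^sup>2) G"
    using hs1 fy by simp
  have fin: "((\<lambda>c. (norm (P c y))\<^sup>2) has_sum (\<Sum>c\<in>{a,b}. (norm (P c y))\<^sup>2)) {a,b}"
    by (rule has_sum_finite) simp
  have "(\<Sum>c\<in>{a,b}. (norm (P c y))\<^sup>2) \<le> (norm y)\<^sup>2"
    by (rule has_sum_mono_neutral[OF fin hs2]) (use ab in auto)
  hence "(norm (P a y))\<^sup>2 + (norm y)\<^sup>2 \<le> (norm y)\<^sup>2" using ab Pby by simp
  hence "(norm (P a y))\<^sup>2 \<le> 0" by simp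
  thus ?thesis by (simp add: y_def)
qed

lemma apply_seq_eq: "apply_seq p ws = fold (\<lambda>f. f) (map (\<lambda>(t, a). p t a) ws)"
  unfolding apply_seq_def fold_map comp_def by (simp add: case_prod_unfold)

theorem theorem7:
  fixes S :: "'s::linorder set"
    and \<Gamma> :: "'s \<Rightarrow> 'b set"
    and p :: "'s \<Rightarrow> 'b \<Rightarrow> 'a::complex_hilbert \<Rightarrow> 'a"
    and V :: "'a set"
  assumes countable: "\<And>t. t \<in> S \<Longrightarrow> countable (\<Gamma> t)"
    and proj: "\<And>t a. t \<in> S \<Longrightarrow> a \<in> \<Gamma> t \<Longrightarrow> is_projection (p t a)"
    and resolution: "\<And>t x. t \<in> S \<Longrightarrow> ((\<lambda>a. p t a x) has_sum x) (\<Gamma> t)"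
    and dense: "closure V = UNIV"
    and prob: "\<And>\<phi>. \<phi> \<in> V \<Longrightarrow> \<phi> \<noteq> 0 \<Longrightarrow>
       \<exists>P. prob_space P \<and> space P = Omega S \<Gamma> \<and> sets P = Sigma_alg S \<Gamma> \<and>
         (\<forall>ws. ws \<noteq> [] \<and> sorted_wrt (<) (map fst ws) \<and> ws \<in> pi_words S \<Gamma> \<longrightarrow>
            measure P (cyl S \<Gamma> ws) = (norm (apply_seq p ws (normalize \<phi>)))\<^sup>2)"
  shows "H_pi S \<Gamma> p = UNIV \<and>
    (\<forall>s\<in>S. \<forall>t\<in>S. \<forall>a\<in>\<Gamma> s. \<forall>b\<in>\<Gamma> t. p s a \<circ> p t b = p t b \<circ> p s a)"
proof -
  have lt: "p t b \<circ> p s c = p s c \<circ> p t b"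
    if st: "s \<in> S" "t \<in> S" "s < t" and cb: "c \<in> \<Gamma> s" "b \<in> \<Gamma> t" for s t c b
  proof -
    define A where "A = p t b"
    define B where "B = p s c"
    have pA: "is_projection A" using proj st cb by (simp add: A_def)
    have pB: "is_projection B" using proj st cb by (simp add: B_def)
    have onV: "norm (A (B \<phi>)) \<le> norm (A \<phi>)" if "\<phi> \<in> V" for \<phi>
    proof (cases "\<phi> = 0")
      case True
      then show ?thesis by (simp add: proj_basic[OF pA] proj_basic[OF pB])
    next
      case False
      obtain P where P: "prob_space P" "space P = Omega S \<Gamma>" "sets P = Sigma_alg S \<Gamma>"
        and mP: "\<And>ws. ws \<noteq> [] \<Longrightarrow> sorted_wrt (<) (map fst ws) \<Longrightarrow> ws \<in> pi_words S \<Gamma> \<Longrightarrow>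
            measure P (cyl S \<Gamma> ws) = (norm (apply_seq p ws (normalize \<phi>)))\<^sup>2"
        using prob[OF \<open>\<phi> \<in> V\<close> False] by blast
      interpret prob_space P by (rule P(1))
      define ws1 where "ws1 = [(s, c), (t, b)]"
      define ws2 where "ws2 = [(t, b)]"
      have m1: "measure P (cyl S \<Gamma> ws1) = (norm (apply_seq p ws1 (normalize \<phi>)))\<^sup>2"
        by (rule mP) (use st cb in \<open>auto simp: ws1_def pi_words_def\<close>)
      have m2: "measure P (cyl S \<Gamma> ws2) = (norm (apply_seq p ws2 (normalize \<phi>)))\<^sup>2"
        by (rule mP) (use st cb in \<open>auto simp: ws2_def pi_words_def\<close>)
      have sub: "cyl S \<Gamma> ws1 \<subseteq> cyl S \<Gamma> ws2" by (auto simp: cyl_def ws1_def ws2_def)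
      have "cyl S \<Gamma> ws2 \<in> cyl_gens S \<Gamma>"
        unfolding cyl_gens_def cyl_def ws2_def using st cb by auto
      hence meas: "cyl S \<Gamma> ws2 \<in> sets P" unfolding P(3) Sigma_alg_def by (rule sigma_sets.Basic)
      have "measure P (cyl S \<Gamma> ws1) \<le> measure P (cyl S \<Gamma> ws2)"
        by (rule finite_measure_mono[OF sub meas])
      hence "(norm (A (B (normalize \<phi>))))\<^sup>2 \<le> (norm (A (normalize \<phi>)))\<^sup>2"
        using m1 m2 by (simp add: ws1_def ws2_def apply_seq_def A_def B_def)
      hence le: "norm (A (B (normalize \<phi>))) \<le> norm (A (normalize \<phi>))"
        by (rule power2_le_imp_le) simp
      define r where "r = inverse (norm \<phi>)"
      have r: "r > 0" using False by (simp add: r_def)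
      have "r * norm (A (B \<phi>)) \<le> r * norm (A \<phi>)"
        using le r by (simp add: normalize_def r_def[symmetric] proj_basic[OF pA] proj_basic[OF pB])
      thus ?thesis using r by simp
    qed
    have bAB: "bounded_linear (\<lambda>\<phi>. A (B \<phi>))"
      using bounded_linear_compose[OF proj_bl[OF pA] proj_bl[OF pB]] .
    have bA: "bounded_linear A" by (rule proj_bl[OF pA])
    have cl: "closed {\<phi>. norm (A (B \<phi>)) \<le> norm (A \<phi>)}"
      by (intro closed_Collect_le continuous_on_norm linear_continuous_on bAB bA)
    have "closure V \<subseteq> {\<phi>. norm (A (B \<phi>)) \<le> norm (A \<phi>)}"
      by (rule closure_minimal) (use onV cl in auto)
    hence all: "norm (A (B \<phi>)) \<le> norm (A \<phi>)" for \<phi> using dense by auto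
    show ?thesis using comm_lemma[OF pA pB all] by (simp add: A_def B_def)
  qed
  have comm: "p s a \<circ> p t b = p t b \<circ> p s a"
    if st: "s \<in> S" "t \<in> S" and ab: "a \<in> \<Gamma> s" "b \<in> \<Gamma> t" for s t a b
  proof (cases s t rule: linorder_cases)
    case less
    then show ?thesis using lt[OF st less ab] by simp
  next
    case greater
    then show ?thesis using lt[OF st(2,1) greater ab(2,1)] by simp
  next
    case equal
    show ?thesis
    proof (cases "a = b")
      case True
      then show ?thesis using equal by simp
    next
      case False
      have r: "\<And>x. ((\<lambda>c. p s c x) has_sum x) (\<Gamma> s)" by (rule resolution[OF st(1)])
      have pr: "\<And>c. c \<in> \<Gamma> s \<Longrightarrow> is_projection (p s c)" by (rule proj[OF st(1)])
      have b': "b \<in> \<Gamma> s" using ab equal by simp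
      show ?thesis using ortho_lemma[OF r pr ab(1) b' False] ortho_lemma[OF r pr b' ab(1)] False equal
        by (auto simp: fun_eq_iff)
    qed
  qed
  have H0: "\<forall>ws \<in> pi_words S \<Gamma>. \<forall>vs \<in> pi_words S \<Gamma>.
       mset (map (\<lambda>(t, a). p t a) ws) = mset (map (\<lambda>(t, a). p t a) vs) \<longrightarrow>
       apply_seq p ws \<phi> = apply_seq p vs \<phi>" for \<phi>
  proof (intro ballI impI)
    fix ws vs
    assume ws: "ws \<in> pi_words S \<Gamma>" and vs: "vs \<in> pi_words S \<Gamma>"
      and m: "mset (map (\<lambda>(t, a). p t a) ws) = mset (map (\<lambda>(t, a). p t a) vs)"
    define L where "L = map (\<lambda>(t, a). p t a) ws"
    have c: "f \<circ> g = g \<circ> f" if "f \<in> set L" "g \<in> set L" for f g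
    proof -
      have "f \<in> (\<lambda>(t, a). p t a) ` set ws" using that(1) unfolding L_def set_map .
      then obtain x where x: "x \<in> set ws" "f = (case x of (t, a) \<Rightarrow> p t a)" by (rule imageE) blast
      have "g \<in> (\<lambda>(t, a). p t a) ` set ws" using that(2) unfolding L_def set_map .
      then obtain y where y: "y \<in> set ws" "g = (case y of (t, a) \<Rightarrow> p t a)" by (rule imageE) blast
      obtain s a where xs: "x = (s, a)" by (cases x)
      obtain t b where yt: "y = (t, b)" by (cases y)
      have i: "(s, a) \<in> set ws" "(t, b) \<in> set ws" and fg: "f = p s a" "g = p t b"
        using x y xs yt by auto
      have "s \<in> S \<and> a \<in> \<Gamma> s" using ws i(1) unfolding pi_words_def by blast
      moreover have "t \<in> S \<and> b \<in> \<Gamma> t" using ws i(2) unfolding pi_words_def by blast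
      ultimately show ?thesis using comm fg by blast
    qed
    have "fold (\<lambda>f. f) L = fold (\<lambda>f. f) (map (\<lambda>(t, a). p t a) vs)"
      by (rule fold_multiset_equiv) (use c m in \<open>auto simp: L_def\<close>)
    hence "fold (\<lambda>f. f) (map (\<lambda>(t, a). p t a) ws) = fold (\<lambda>f. f) (map (\<lambda>(t, a). p t a) vs)"
      by (simp add: L_def)
    thus "apply_seq p ws \<phi> = apply_seq p vs \<phi>" by (simp add: apply_seq_eq)
  qed
  have H: "H_pi S \<Gamma> p = UNIV" using H0 unfolding H_pi_def by blast
  show ?thesis using H comm by blast
qed

end
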